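(* Let $1\le k<n$ and let $X$ be a fixed (non-random) real $n\times k$ matrix of full column rank $k$. Let $\mathbf{F}_2$ be the class of all distributions $F$ of the random vector $Y=X\beta+e$ in $\mathbb{R}^n$, where $\beta$ ranges over $\mathbb{R}^k$ and the distribution of the error vector $e$ ranges over all distributions on $\mathbb{R}^n$ with $E e'e<\infty$, $Ee=0$ and $Eee'=\sigma^2\Sigma$ for some $0<\sigma^2<\infty$ and some symmetric positive definite $n\times n$ matrix $\Sigma$. For $F\in\mathbf{F}_2$, let $\beta(F)$ denote the (unique) $\beta\in\mathbb{R}^k$ with $E_F Y = X\beta$. Suppose $\hat\beta:\mathbb{R}^n\to\mathbb{R}^k$ is a Borel-measurable function such that, for every $F\in\mathbf{F}_2$, $E_F\hat\beta(Y)$ exists and $E_F\hat\beta(Y)=\beta(F)$. Then $\hat\beta$ is linear, i.e., there is a $k\times n$ real matrix $A$ with $\hat\beta(y)=Ay$ for all $y\in\mathbb{R}^n$.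
   Context: $E_F$ denotes expectation when $Y$ has distribution $F$. Since $X$ has full column rank, $\beta(F)$ is uniquely determined by $F$. *)

theory Defs
  imports "HOL-Probability.Probability"
begin

definition sym_pos_def_matrix :: "real^'n^'n \<Rightarrow> bool" where
  "sym_pos_def_matrix S \<longleftrightarrow> transpose S = S \<and> (\<forall>x. x \<noteq> 0 \<longrightarrow> x \<bullet> (S *v x) > 0)"

definition error_dist :: "(real^'n) measure \<Rightarrow> bool" where
  "error_dist P \<longleftrightarrow> prob_space P \<and> sets P = sets borel \<and>
     integrable P (\<lambda>e. e \<bullet> e) \<and>
     integrable P (\<lambda>e. e) \<and> (\<integral>e. e \<partial>P) = 0 \<and>
     (\<exists>\<sigma>2 \<Sigma>. 0 < \<sigma>2 \<and> sym_pos_def_matrix \<Sigma> \<and>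
        (\<forall>i j. (\<integral>e. e $ i * e $ j \<partial>P) = \<sigma>2 * \<Sigma> $ i $ j))"

definition F2 :: "real^'k^'n \<Rightarrow> (real^'n) measure set" where
  "F2 X = {distr P borel (\<lambda>e. X *v \<beta> + e) | \<beta> P. error_dist P}"

definition beta_of :: "real^'k^'n \<Rightarrow> (real^'n) measure \<Rightarrow> real^'k" where
  "beta_of X F = (THE \<beta>. (\<integral>y. y \<partial>F) = X *v \<beta>)"

end

theory Submission
  imports Defs
begin

lemma weights_pmf:
  fixes w :: "'a \<Rightarrow> real"
  assumes fin: "finite A" and out: "\<And>y. y \<notin> A \<Longrightarrow> w y = 0" and nn: "\<And>y. 0 \<le> w y"
    and s1: "sum w A = 1"
  shows "\<exists>D. (\<forall>x. pmf D x = w x) \<and> set_pmf D \<subseteq> A"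
proof -
  have prob: "(\<integral>\<^sup>+x. ennreal (w x) \<partial>count_space UNIV) = 1"
    using nn_integral_count_space'[OF fin, of UNIV "\<lambda>x. ennreal (w x)"] out s1 nn
    by (simp add: sum_ennreal)
  define D where "D = embed_pmf w"
  have p: "\<And>x. pmf D x = w x" unfolding D_def using pmf_embed_pmf[of w] nn prob by blast
  have "set_pmf D \<subseteq> A" using p out by (force simp: set_pmf_iff)
  with p show ?thesis by blast
qed

lemma quad_form:
  fixes x :: "real^'n"
  assumes "finite A"
  shows "x \<bullet> ((\<chi> i j. \<Sum>a\<in>A. w a * (a$i * a$j)) *v x) = (\<Sum>a\<in>A. w a * (x \<bullet> a)^2)"
proof -
  let ?M = "(\<chi> i j. \<Sum>a\<in>A. w a * (a$i * a$j)) :: real^'n^'n"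
  have 1: "x \<bullet> (?M *v x) = (\<Sum>i\<in>UNIV. \<Sum>j\<in>UNIV. \<Sum>a\<in>A. w a * (x$i*a$i) * (x$j*a$j))"
    by (simp add: inner_vec_def matrix_vector_mult_def sum_distrib_left sum_distrib_right mult_ac)
  also have "\<dots> = (\<Sum>i\<in>UNIV. \<Sum>a\<in>A. \<Sum>j\<in>UNIV. w a * (x$i*a$i) * (x$j*a$j))"
    by (rule sum.cong[OF refl], rule sum.swap)
  also have "\<dots> = (\<Sum>a\<in>A. \<Sum>i\<in>UNIV. \<Sum>j\<in>UNIV. w a * (x$i*a$i) * (x$j*a$j))"
    by (rule sum.swap)
  also have "\<dots> = (\<Sum>a\<in>A. w a * (x \<bullet> a)^2)"
    by (rule sum.cong[OF refl]) (simp add: inner_vec_def power2_eq_square sum_product sum_distrib_left mult_ac)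
  finally show ?thesis .
qed

lemma key_pd:
  fixes X :: "real^'k^'n" and betahat :: "real^'n \<Rightarrow> real^'k" and w :: "real^'n \<Rightarrow> real"
  assumes rk: "rank X = CARD('k)"
    and bm: "betahat \<in> borel_measurable borel"
    and hyp: "\<And>F. F \<in> F2 X \<Longrightarrow> integrable F betahat \<and> (\<integral>y. betahat y \<partial>F) = beta_of X F"
    and fin: "finite A" and out: "\<And>y. y \<notin> A \<Longrightarrow> w y = 0" and nn: "\<And>y. 0 \<le> w y"
    and s1: "sum w A = 1" and m0: "(\<Sum>a\<in>A. w a *\<^sub>R a) = 0"
    and pd: "\<And>x. x \<noteq> 0 \<Longrightarrow> 0 < (\<Sum>a\<in>A. w a * (x \<bullet> a)^2)"
  shows "(\<Sum>a\<in>A. w a *\<^sub>R betahat a) = 0"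
proof -
  obtain D where pD: "\<And>x. pmf D x = w x" and sD: "set_pmf D \<subseteq> A"
    using weights_pmf[OF fin out nn s1] by blast
  have intD: "(\<integral>x. f x \<partial>measure_pmf D) = (\<Sum>a\<in>A. w a *\<^sub>R f a)"
    for f :: "real^'n \<Rightarrow> 'b::{banach, second_countable_topology}"
    using integral_measure_pmf[OF fin, of D f] sD pD by auto
  have finD: "finite (set_pmf D)" using sD fin finite_subset by blast
  define P where "P = distr (measure_pmf D) borel (\<lambda>x. x)"
  have meas: "(\<lambda>x. x) \<in> measurable (measure_pmf D) borel" by simp
  have sP: "sets P = sets borel" unfolding P_def by simp
  have intP: "(\<integral>x. f x \<partial>P) = (\<Sum>a\<in>A. w a *\<^sub>R f a)"
    if "f \<in> borel_measurable borel" for f :: "real^'n \<Rightarrow> 'b::{banach, second_countable_topology}"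
    unfolding P_def using integral_distr[OF meas that] intD by simp
  have igP: "integrable P f"
    if "f \<in> borel_measurable borel" for f :: "real^'n \<Rightarrow> 'b::{banach, second_countable_topology}"
    unfolding P_def using integrable_distr_eq[OF meas that] integrable_measure_pmf_finite[OF finD] by simp
  have psP: "prob_space P" unfolding P_def
    by (rule prob_space.prob_space_distr[OF prob_space_measure_pmf meas])
  have mean0: "(\<integral>e. e \<partial>P) = 0" using intP[of "\<lambda>x. x"] m0 by simp
  define S where "S = ((\<chi> i j. \<Sum>a\<in>A. w a * (a$i * a$j)) :: real^'n^'n)"
  have symS: "transpose S = S" unfolding S_def transpose_def by (simp add: mult.commute)
  have pdS: "sym_pos_def_matrix S"
    unfolding sym_pos_def_matrix_def using symS pd quad_form[OF fin] S_def by simp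
  have cov: "(\<integral>e. e $ i * e $ j \<partial>P) = 1 * S $ i $ j" for i j
    using intP[of "\<lambda>e. e $ i * e $ j"] unfolding S_def by simp
  have ed: "error_dist P"
  proof -
    have "integrable P (\<lambda>e. e \<bullet> e)" by (rule igP) simp
    moreover have "integrable P (\<lambda>e. e)" by (rule igP) simp
    moreover have "\<exists>\<sigma>2 \<Sigma>. 0 < \<sigma>2 \<and> sym_pos_def_matrix \<Sigma> \<and>
        (\<forall>i j. (\<integral>e. e $ i * e $ j \<partial>P) = \<sigma>2 * \<Sigma> $ i $ j)"
      using pdS cov by (intro exI[of _ "1::real"] exI[of _ S]) auto
    ultimately show ?thesis unfolding error_dist_def using psP sP mean0 by blast
  qed
  have "distr P borel (\<lambda>e. X *v 0 + e) \<in> F2 X"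
    unfolding F2_def using ed by blast
  moreover have "distr P borel (\<lambda>e. X *v 0 + e) = P"
    using distr_id2[of borel P] sP by simp
  ultimately have h: "(\<integral>y. betahat y \<partial>P) = beta_of X P" using hyp by auto
  have inj: "inj ((*v) X)" using rk full_rank_injective by blast
  have "beta_of X P = 0" unfolding beta_of_def mean0
  proof (rule the_equality)
    fix b assume "0 = X *v b"
    then show "b = 0" using inj by (metis injD matrix_vector_mult_0_right)
  qed simp
  then show ?thesis using h intP[OF bm] by simp
qed

lemma Q_props:
  defines "B \<equiv> range (\<lambda>i. axis i (1::real)) \<union> range (\<lambda>i. axis i (-1)) :: (real^'n) set"
  defines "q \<equiv> (\<lambda>y. if y \<in> B then 1 / real (card B) else 0)"
  shows "finite B" "\<And>y. y \<notin> B \<Longrightarrow> q y = 0" "\<And>y. 0 \<le> q y" "sum q B = 1"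
    "(\<Sum>b\<in>B. q b *\<^sub>R b) = 0" "\<And>x. x \<noteq> 0 \<Longrightarrow> 0 < (\<Sum>b\<in>B. q b * (x \<bullet> b)^2)"
proof -
  show fB: "finite B" unfolding B_def by simp
  show "\<And>y. y \<notin> B \<Longrightarrow> q y = 0" unfolding q_def by simp
  show "\<And>y. 0 \<le> q y" unfolding q_def by simp
  have ne: "B \<noteq> {}" unfolding B_def by simp
  then have cB: "card B > 0" using fB by (simp add: card_gt_0_iff)
  show "sum q B = 1" unfolding q_def using cB by simp
  have neg: "- axis i (1::real) = axis i (-1)" for i :: 'n
    by (simp add: axis_def vec_eq_iff)
  have neg2: "- axis i (-1::real) = axis i 1" for i :: 'n
    by (simp add: axis_def vec_eq_iff)
  have img: "uminus ` B = B"
  proof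
    show "uminus ` B \<subseteq> B" unfolding B_def using neg neg2 by auto
    then show "B \<subseteq> uminus ` B" by (metis (no_types, lifting) image_subset_iff imageI minus_minus subsetI)
  qed
  have "sum (\<lambda>b. b) B = sum (\<lambda>b. b) (uminus ` B)" using img by simp
  also have "\<dots> = sum (\<lambda>b. - b) B" by (subst sum.reindex) (auto simp: inj_on_def)
  also have "\<dots> = - sum (\<lambda>b. b) B" by (simp add: sum_negf)
  finally have h: "sum (\<lambda>b. b) B = - sum (\<lambda>b. b) B" .
  then have "(2::real) *\<^sub>R sum (\<lambda>b. b) B = 0" by (simp add: scaleR_2 eq_neg_iff_add_eq_0)
  then have "sum (\<lambda>b. b) B = 0" by simp
  then show "(\<Sum>b\<in>B. q b *\<^sub>R b) = 0" unfolding q_def by (simp add: scaleR_sum_right[symmetric])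
  fix x :: "real^'n" assume "x \<noteq> 0"
  then obtain i where xi: "x $ i \<noteq> 0" by (metis vec_eq_iff zero_index)
  have iB: "axis i 1 \<in> B" unfolding B_def by simp
  show "0 < (\<Sum>b\<in>B. q b * (x \<bullet> b)^2)"
    by (rule sum_pos2[OF fB iB]) (use xi cB in \<open>auto simp: q_def inner_axis iB\<close>)
qed

lemma sum_extend:
  fixes f :: "'a \<Rightarrow> 'b::real_vector"
  assumes "finite C" "A \<subseteq> C" "\<And>y. y \<notin> A \<Longrightarrow> w y = 0"
  shows "(\<Sum>y\<in>C. w y *\<^sub>R f y) = (\<Sum>y\<in>A. w y *\<^sub>R f y)"
  by (rule sum.mono_neutral_right) (use assms in auto)

lemma key_all:
  fixes X :: "real^'k^'n" and betahat :: "real^'n \<Rightarrow> real^'k" and w :: "real^'n \<Rightarrow> real"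
  assumes rk: "rank X = CARD('k)"
    and bm: "betahat \<in> borel_measurable borel"
    and hyp: "\<And>F. F \<in> F2 X \<Longrightarrow> integrable F betahat \<and> (\<integral>y. betahat y \<partial>F) = beta_of X F"
    and fin: "finite A" and out: "\<And>y. y \<notin> A \<Longrightarrow> w y = 0" and nn: "\<And>y. 0 \<le> w y"
    and s1: "sum w A = 1" and m0: "(\<Sum>a\<in>A. w a *\<^sub>R a) = 0"
  shows "(\<Sum>a\<in>A. w a *\<^sub>R betahat a) = 0"
proof -
  define B where "B = (range (\<lambda>i. axis i (1::real)) \<union> range (\<lambda>i. axis i (-1)) :: (real^'n) set)"
  define q where "q y = (if y \<in> B then 1 / real (card B) else 0)" for y :: "real^'n"
  note Q = Q_props[where 'n='n, folded B_def, folded q_def]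
  have QB: "(\<Sum>a\<in>B. q a *\<^sub>R betahat a) = 0"
    by (rule key_pd[OF rk bm hyp Q(1) Q(2) Q(3) Q(4) Q(5) Q(6)])
  define C where "C = A \<union> B"
  define v where "v = (\<lambda>y. (1/2) * w y + (1/2) * q y)"
  have fC: "finite C" unfolding C_def using fin Q(1) by simp
  have AC: "A \<subseteq> C" and BC: "B \<subseteq> C" unfolding C_def by auto
  have split: "(\<Sum>y\<in>C. v y *\<^sub>R f y) = (1/2) *\<^sub>R (\<Sum>y\<in>A. w y *\<^sub>R f y) + (1/2) *\<^sub>R (\<Sum>y\<in>B. q y *\<^sub>R f y)"
    for f :: "real^'n \<Rightarrow> 'b::real_vector"
  proof -
    have "(\<Sum>y\<in>C. v y *\<^sub>R f y) = (1/2) *\<^sub>R (\<Sum>y\<in>C. w y *\<^sub>R f y) + (1/2) *\<^sub>R (\<Sum>y\<in>C. q y *\<^sub>R f y)"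
      unfolding v_def by (simp add: scaleR_add_left sum.distrib scaleR_sum_right)
    then show ?thesis using sum_extend[OF fC AC, of w f] sum_extend[OF fC BC, of q f] out Q(2) by simp
  qed
  have splitr: "(\<Sum>y\<in>C. v y * g y) = (1/2) * (\<Sum>y\<in>A. w y * g y) + (1/2) * (\<Sum>y\<in>B. q y * g y)"
    for g :: "real^'n \<Rightarrow> real"
    using split[of g] by simp
  have "(\<Sum>y\<in>C. v y *\<^sub>R betahat y) = 0"
  proof (rule key_pd[OF rk bm hyp fC])
    show "\<And>y. y \<notin> C \<Longrightarrow> v y = 0" unfolding v_def C_def using out Q(2) by auto
    show "\<And>y. 0 \<le> v y" unfolding v_def using nn Q(3) by (simp add: add_nonneg_nonneg)
    show "sum v C = 1" using splitr[of "\<lambda>_. 1"] s1 Q(4) by simp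
    show "(\<Sum>a\<in>C. v a *\<^sub>R a) = 0" using split[of "\<lambda>a. a"] m0 Q(5) by simp
    fix x :: "real^'n" assume "x \<noteq> 0"
    then have "0 < (\<Sum>b\<in>B. q b * (x \<bullet> b)^2)" by (rule Q(6))
    moreover have "0 \<le> (\<Sum>b\<in>A. w b * (x \<bullet> b)^2)" using nn by (simp add: sum_nonneg)
    ultimately show "0 < (\<Sum>a\<in>C. v a * (x \<bullet> a)^2)" using splitr[of "\<lambda>a. (x \<bullet> a)^2"] by simp
  qed
  then show ?thesis using split[of betahat] QB by simp
qed

lemma key_idx:
  fixes X :: "real^'k^'n" and betahat :: "real^'n \<Rightarrow> real^'k" and w :: "'i \<Rightarrow> real" and g :: "'i \<Rightarrow> real^'n"
  assumes rk: "rank X = CARD('k)"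
    and bm: "betahat \<in> borel_measurable borel"
    and hyp: "\<And>F. F \<in> F2 X \<Longrightarrow> integrable F betahat \<and> (\<integral>y. betahat y \<partial>F) = beta_of X F"
    and fin: "finite I" and nn: "\<And>i. i \<in> I \<Longrightarrow> 0 \<le> w i"
    and s1: "sum w I = 1" and m0: "(\<Sum>i\<in>I. w i *\<^sub>R g i) = 0"
  shows "(\<Sum>i\<in>I. w i *\<^sub>R betahat (g i)) = 0"
proof -
  define W where "W u = sum w {i\<in>I. g i = u}" for u
  have tr: "(\<Sum>u\<in>g ` I. W u *\<^sub>R f u) = (\<Sum>i\<in>I. w i *\<^sub>R f (g i))"
    for f :: "real^'n \<Rightarrow> 'b::real_vector"
  proof -
    have "(\<Sum>i\<in>I. w i *\<^sub>R f (g i)) = (\<Sum>u\<in>g ` I. \<Sum>i\<in>{i\<in>I. g i = u}. w i *\<^sub>R f (g i))"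
      using sum.image_gen[OF fin, of "\<lambda>i. w i *\<^sub>R f (g i)" g] .
    also have "\<dots> = (\<Sum>u\<in>g ` I. W u *\<^sub>R f u)"
      unfolding W_def by (rule sum.cong[OF refl]) (simp add: scaleR_sum_left)
    finally show ?thesis by simp
  qed
  have "(\<Sum>u\<in>g ` I. W u *\<^sub>R betahat u) = 0"
  proof (rule key_all[OF rk bm hyp])
    show "finite (g ` I)" using fin by simp
    show "\<And>y. y \<notin> g ` I \<Longrightarrow> W y = 0" unfolding W_def by (auto intro!: sum.neutral)
    show "\<And>y. 0 \<le> W y" unfolding W_def using nn by (auto intro!: sum_nonneg)
    show "sum W (g ` I) = 1" using tr[of "\<lambda>_. 1::real"] s1 by simp
    show "(\<Sum>a\<in>g ` I. W a *\<^sub>R a) = 0" using tr[of "\<lambda>a. a"] m0 by simp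
  qed
  then show ?thesis using tr[of betahat] by simp
qed

theorem theorem3p4:
  fixes X :: "real^'k^'n"
    and betahat :: "real^'n \<Rightarrow> real^'k"
  assumes "CARD('k) < CARD('n)"
    and "rank X = CARD('k)"
    and "betahat \<in> borel_measurable borel"
    and "\<And>F. F \<in> F2 X \<Longrightarrow> integrable F betahat \<and> (\<integral>y. betahat y \<partial>F) = beta_of X F"
  shows "\<exists>A :: real^'n^'k. \<forall>y. betahat y = A *v y"
proof -
  note K = key_idx[OF assms(2) assms(3) assms(4)]
  have zero: "betahat 0 = 0"
    using K[of "{0::nat}" "\<lambda>_. 1" "\<lambda>_. 0"] by simp
  have odd: "betahat (- y) = - betahat y" for y
  proof -
    have "(\<Sum>b\<in>UNIV. (1/2::real) *\<^sub>R betahat (if b then y else - y)) = 0"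
      by (rule K) (auto simp: UNIV_bool)
    then have "(1/2::real) *\<^sub>R betahat y + (1/2::real) *\<^sub>R betahat (-y) = 0"
      by (simp add: UNIV_bool add.commute)
    then have "(2::real) *\<^sub>R ((1/2::real) *\<^sub>R betahat y + (1/2::real) *\<^sub>R betahat (-y)) = 0" by simp
    then have "betahat y + betahat (-y) = 0" by (simp only: scaleR_add_right scaleR_scaleR) simp
    then show ?thesis by (metis neg_eq_iff_add_eq_0)
  qed
  have hneg: "betahat (- (t *\<^sub>R y)) = - (t *\<^sub>R betahat y)" if t: "t > 0" for t y
  proof -
    let ?w = "\<lambda>b. if b then t/(1+t) else 1/(1+t)"
    let ?g = "\<lambda>b. if b then y else - (t *\<^sub>R y)"
    have "(\<Sum>b\<in>UNIV. ?w b *\<^sub>R betahat (?g b)) = 0"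
    proof (rule K)
      show "(\<Sum>b\<in>UNIV. ?w b) = 1" using t by (simp add: UNIV_bool field_simps)
      show "(\<Sum>b\<in>UNIV. ?w b *\<^sub>R ?g b) = 0" using t by (simp add: UNIV_bool)
    qed (use t in auto)
    then have "(t/(1+t)) *\<^sub>R betahat y + (1/(1+t)) *\<^sub>R betahat (- (t *\<^sub>R y)) = 0"
      by (simp add: UNIV_bool add.commute)
    then have "(1+t) *\<^sub>R ((t/(1+t)) *\<^sub>R betahat y + (1/(1+t)) *\<^sub>R betahat (- (t *\<^sub>R y))) = 0" by simp
    then have "t *\<^sub>R betahat y + betahat (- (t *\<^sub>R y)) = 0"
      using t by (simp add: scaleR_add_right)
    then show ?thesis by (simp add: eq_neg_iff_add_eq_0 add.commute)
  qed
  have hom: "betahat (t *\<^sub>R y) = t *\<^sub>R betahat y" for t y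
  proof (cases "t > 0")
    case True
    have "betahat (t *\<^sub>R y) = - betahat (- (t *\<^sub>R y))" using odd[of "t *\<^sub>R y"] by simp
    then show ?thesis using hneg[OF True] by simp
  next
    case False
    show ?thesis
    proof (cases "t = 0")
      case True then show ?thesis using zero by simp
    next
      case False
      then have "-t > 0" using \<open>\<not> t > 0\<close> by simp
      from hneg[OF this, of y] show ?thesis by simp
    qed
  qed
  have add: "betahat (y + z) = betahat y + betahat z" for y z
  proof -
    let ?g = "\<lambda>i::nat. if i = 0 then y else if i = 1 then z else - (y + z)"
    have "(\<Sum>i\<in>{0,1,2}. (1/3::real) *\<^sub>R betahat (?g i)) = 0"
      by (rule K) (simp_all add: algebra_simps)
    then have "(1/3::real) *\<^sub>R betahat y + ((1/3::real) *\<^sub>R betahat z + (1/3::real) *\<^sub>R betahat (- (y + z))) = 0"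
      by simp
    then have "(3::real) *\<^sub>R ((1/3::real) *\<^sub>R betahat y + ((1/3::real) *\<^sub>R betahat z + (1/3::real) *\<^sub>R betahat (- (y + z)))) = 0" by simp
    then have "betahat y + betahat z + betahat (- (y + z)) = 0" by (simp only: scaleR_add_right scaleR_scaleR) (simp add: add.assoc)
    then have "betahat (- (y + z)) = - (betahat y + betahat z)"
      by (metis add.commute neg_eq_iff_add_eq_0)
    then have "- betahat (y + z) = - (betahat y + betahat z)" using odd[of "y + z"] by simp
    then show ?thesis by (metis minus_add_distrib minus_minus)
  qed
  have "linear betahat" by (rule linearI) (use add hom in auto)
  then have "Vector_Spaces.linear (*s) (*s) betahat" by (simp add: linear_matrix_vector_mul_eq)
  then show ?thesis using matrix_works by metis
qed

end
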